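(* Fix $\gamma \geq 1$. Let $A(u,v) = (u,u+v)$, $\mathbf{1} = (1,1)$, $\mathbf{c} = (\gamma,1)$, and define $T:\mathbb{R}^2\to\mathbb{R}^2$ by $$T\mathbf{x} = \begin{cases} A\mathbf{x} + \mathbf{1}, & \langle \mathbf{c},\mathbf{x}\rangle \leq -1/2,\\ A\mathbf{x}, & |\langle \mathbf{c},\mathbf{x}\rangle| < 1/2,\\ A\mathbf{x} - \mathbf{1}, & \langle \mathbf{c},\mathbf{x}\rangle \geq 1/2.\end{cases}$$ Let $V:\mathbb{R}^2\to\mathbb{R}$ be the convex function $V(u,v) = u^2 + |2v - u|$, and let $R = R_1\cup R_2$ with $$R_1 = \{(u,v) : \gamma u + v \geq 0,\ 2v + u \leq 1,\ u \leq 1/2\},\qquad R_2 = \{(u,v) : \gamma u + v < 0,\ 2v + u \geq -1,\ u \geq -1/2\}.$$ If $\mathbf{x}\in\mathbb{R}^2$ satisfies $V(T\mathbf{x}) - V(\mathbf{x}) > 0$, then $\mathbf{x} \in R$. Moreover, $R \subseteq S$, where $S = S^+\cup S^-$ with $S^+ = \{(u,v) : -1/2 \leq \gamma u + v \leq 1/2 + \gamma,\ 0 \leq u < 1\}$ and $S^- = \{(u,v) : -(1/2+\gamma) \leq \gamma u + v \leq 1/2,\ -1 \leq u < 0\}$.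
   Context: $\langle\cdot,\cdot\rangle$ is the standard inner product on $\mathbb{R}^2$. *)

theory Defs
  imports "HOL-Analysis.Analysis"
begin

definition A_map :: "real \<times> real \<Rightarrow> real \<times> real" where
  "A_map x = (fst x, fst x + snd x)"

definition one_vec :: "real \<times> real" where
  "one_vec = (1, 1)"

definition c_vec :: "real \<Rightarrow> real \<times> real" where
  "c_vec \<gamma> = (\<gamma>, 1)"

definition T_map :: "real \<Rightarrow> real \<times> real \<Rightarrow> real \<times> real" where
  "T_map \<gamma> x =
     (if c_vec \<gamma> \<bullet> x \<le> -1/2 then A_map x + one_vec
      else if \<bar>c_vec \<gamma> \<bullet> x\<bar> < 1/2 then A_map x
      else A_map x - one_vec)"

definition V_fun :: "real \<times> real \<Rightarrow> real" where
  "V_fun x = (fst x)^2 + \<bar>2 * snd x - fst x\<bar>"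

definition R1_set :: "real \<Rightarrow> (real \<times> real) set" where
  "R1_set \<gamma> = {(u, v). \<gamma> * u + v \<ge> 0 \<and> 2 * v + u \<le> 1 \<and> u \<le> 1/2}"

definition R2_set :: "real \<Rightarrow> (real \<times> real) set" where
  "R2_set \<gamma> = {(u, v). \<gamma> * u + v < 0 \<and> 2 * v + u \<ge> -1 \<and> u \<ge> -1/2}"

definition R_set :: "real \<Rightarrow> (real \<times> real) set" where
  "R_set \<gamma> = R1_set \<gamma> \<union> R2_set \<gamma>"

definition Splus_set :: "real \<Rightarrow> (real \<times> real) set" where
  "Splus_set \<gamma> = {(u, v). -1/2 \<le> \<gamma> * u + v \<and> \<gamma> * u + v \<le> 1/2 + \<gamma> \<and> 0 \<le> u \<and> u < 1}"

definition Sminus_set :: "real \<Rightarrow> (real \<times> real) set" where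
  "Sminus_set \<gamma> = {(u, v). -(1/2 + \<gamma>) \<le> \<gamma> * u + v \<and> \<gamma> * u + v \<le> 1/2 \<and> -1 \<le> u \<and> u < 0}"

definition S_set :: "real \<Rightarrow> (real \<times> real) set" where
  "S_set \<gamma> = Splus_set \<gamma> \<union> Sminus_set \<gamma>"

end

theory Submission
  imports Defs
begin

lemma part1:
  fixes \<gamma> u v :: real
  assumes g: "\<gamma> \<ge> 1" and d: "V_fun (T_map \<gamma> (u,v)) - V_fun (u,v) > 0"
  shows "(u,v) \<in> R_set \<gamma>"
proof -
  define s where "s = \<gamma>*u + v"
  have cs: "c_vec \<gamma> \<bullet> (u,v) = s" by (simp add: c_vec_def s_def)
  have uv: "u \<ge> 0 \<longrightarrow> \<gamma>*u \<ge> u" "u \<le> 0 \<longrightarrow> \<gamma>*u \<le> u"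
    using g mult_right_mono_neg[of 1 \<gamma> u] mult_right_mono[of 1 \<gamma> u] by auto
  have m: "(u > 0 \<and> v > 0) \<or> (u < 0 \<and> v < 0) \<or> \<bar>u+2* v\<bar> \<le> \<bar>2* v-u\<bar>"
  proof -
    have "u* v \<le> 0 \<or> (u > 0 \<and> v > 0) \<or> (u < 0 \<and> v < 0)"
      by (metis linorder_not_le mult_nonneg_nonpos mult_nonpos_nonneg order_less_imp_le)
    moreover have "u* v \<le> 0 \<Longrightarrow> \<bar>u+2* v\<bar> \<le> \<bar>2* v-u\<bar>"
    proof -
      assume h: "u* v \<le> 0"
      have "\<bar>u+2* v\<bar>^2 \<le> \<bar>2* v-u\<bar>^2" using h by (simp add: power2_eq_square algebra_simps)
      thus ?thesis using abs_le_square_iff by (metis abs_abs)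
    qed
    ultimately show ?thesis by blast
  qed
  have R: "(u,v) \<in> R_set \<gamma> \<longleftrightarrow> (s \<ge> 0 \<and> 2* v+u \<le> 1 \<and> u \<le> 1/2) \<or> (s < 0 \<and> 2* v+u \<ge> -1 \<and> u \<ge> -1/2)"
    by (simp add: R_set_def R1_set_def R2_set_def s_def)
  show ?thesis
  proof (cases "s \<le> -1/2")
    case True
    hence "V_fun (T_map \<gamma> (u,v)) = (u+1)^2 + \<bar>u+2* v+1\<bar>"
      by (simp add: cs T_map_def A_map_def one_vec_def V_fun_def algebra_simps)
    hence "2*u+1 + \<bar>u+2* v+1\<bar> - \<bar>2* v-u\<bar> > 0" using d by (simp add: V_fun_def power2_eq_square algebra_simps)
    thus ?thesis using True R by (simp add: abs_if split: if_splits)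
  next
    case F1: False
    show ?thesis
    proof (cases "s \<ge> 1/2")
      case True
      hence "V_fun (T_map \<gamma> (u,v)) = (u-1)^2 + \<bar>u+2* v-1\<bar>"
        using True F1 by (simp add: cs T_map_def A_map_def one_vec_def V_fun_def algebra_simps)
      hence "-2*u+1 + \<bar>u+2* v-1\<bar> - \<bar>2* v-u\<bar> > 0" using d by (simp add: V_fun_def power2_eq_square algebra_simps)
      thus ?thesis using True R by (simp add: abs_if split: if_splits)
    next
      case False
      have ab: "\<bar>s\<bar> < 1/2" using False F1 by auto
      have "V_fun (T_map \<gamma> (u,v)) = u^2 + \<bar>u+2* v\<bar>"
        using F1 ab by (simp add: cs T_map_def A_map_def one_vec_def V_fun_def algebra_simps)
      hence "\<bar>u+2* v\<bar> - \<bar>2* v-u\<bar> > 0" using d by (simp add: V_fun_def)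
      hence "(u > 0 \<and> v > 0) \<or> (u < 0 \<and> v < 0)" using m by linarith
      thus ?thesis using False F1 R uv unfolding s_def by auto
    qed
  qed
qed

lemma part2:
  fixes \<gamma> u v :: real
  assumes g: "\<gamma> \<ge> 1" and r: "(u,v) \<in> R_set \<gamma>"
  shows "(u,v) \<in> S_set \<gamma>"
proof -
  define s where "s = \<gamma>*u + v"
  have a: "u \<ge> 0 \<longrightarrow> \<gamma>*u \<ge> u" "u \<le> 0 \<longrightarrow> \<gamma>*u \<le> u"
    using g mult_right_mono_neg[of 1 \<gamma> u] mult_right_mono[of 1 \<gamma> u] by auto
  have e: "u < -1 \<longrightarrow> (2*\<gamma>-1)*(u+1) < 0" "u \<ge> 1 \<longrightarrow> (2*\<gamma>-1)*(u-1) \<ge> 0"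
    using g by (auto simp: mult_pos_neg mult_nonneg_nonneg)
  have f: "u \<le> 1/2 \<longrightarrow> \<gamma>*u \<le> \<gamma>*(1/2)" "u \<ge> -1/2 \<longrightarrow> \<gamma>*u \<ge> \<gamma>*(-1/2)"
    using g mult_left_mono[of u "1/2" \<gamma>] mult_left_mono[of "-1/2" u \<gamma>] by auto
  have e2: "(2*\<gamma>-1)*(u+1) = 2*\<gamma>*u + 2*\<gamma> - u - 1" "(2*\<gamma>-1)*(u-1) = 2*\<gamma>*u - 2*\<gamma> - u + 1"
    by (simp_all add: algebra_simps)
  have R: "(s \<ge> 0 \<and> 2* v+u \<le> 1 \<and> u \<le> 1/2) \<or> (s < 0 \<and> 2* v+u \<ge> -1 \<and> u \<ge> -1/2)"
    using r by (simp add: R_set_def R1_set_def R2_set_def s_def)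
  have S: "(-1/2 \<le> s \<and> s \<le> 1/2 + \<gamma> \<and> 0 \<le> u \<and> u < 1) \<or> (-(1/2+\<gamma>) \<le> s \<and> s \<le> 1/2 \<and> -1 \<le> u \<and> u < 0)"
    using R a e e2 f g unfolding s_def by linarith
  thus ?thesis by (simp add: S_set_def Splus_set_def Sminus_set_def s_def)
qed

theorem proposition5:
  fixes \<gamma> :: real
  assumes "\<gamma> \<ge> 1"
  shows "(\<forall>x :: real \<times> real. V_fun (T_map \<gamma> x) - V_fun x > 0 \<longrightarrow> x \<in> R_set \<gamma>)
         \<and> R_set \<gamma> \<subseteq> S_set \<gamma>"
  using part1[OF assms] part2[OF assms] by auto

end
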